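(* For any $i\in I$, we have: \begin{enumerate} \item[(i)] $\mathcal{D}\circ T_i=T_i\circ\mathcal{D}$; \item[(ii)] $T_i^{-1}=*\circ T_i\circ *$; \item[(iii)] $\sigma\circ T_i=T_{\sigma(i)}\circ\sigma$ for any Dynkin diagram automorphism $\sigma$ of $\mathfrak{g}$; \item[(iv)] $T_i\circ\overline{\phantom{x}}=\overline{\phantom{x}}\circ T_i$. \end{enumerate}
   Context: Let $\mathsf{C}=(c_{i,j})_{i,j\in I}$ be a finite-type Cartan matrix of $\mathfrak{g}$, $(\alpha_i,\alpha_j)=\mathsf{d}_ic_{i,j}$ ($\min\mathsf{d}_i=1$), $q_i=q^{\mathsf{d}_i}$, $\mathbf{k}=\mathbb{Q}(q^{1/2})$. $\widehat{\mathcal{A}}$ is the bosonic extension generated by $f_{i,p}$ ($i\in I,p\in\mathbb{Z}$) with quantum Serre relations among $\{f_{i,p}\}_{i\in I}$ for fixed $p$, $f_{i,m}f_{j,p}=q_i^{(-1)^{p-m+1}c_{i,j}}f_{j,p}f_{i,m}$ ($p>m+1$), $f_{i,p}f_{j,p+1}=q_i^{c_{i,j}}f_{j,p+1}f_{i,p}+\delta_{i,j}(1-q_i^2)$. On $\widehat{\mathcal{A}}$: $*$ is the $\mathbf{k}$-algebra anti-automorphism $f_{i,p}\mapsto f_{i,-p}$; $\sigma$ (for a diagram automorphism) is the algebra automorphism $f_{i,p}\mapsto f_{\sigma(i),p}$; $\overline{\phantom{x}}$ is the $\mathbb{Q}$-algebra anti-automorphism with $\overline{f_{i,p}}=f_{i,p}$,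 $\overline{q^{1/2}}=q^{-1/2}$; $\mathcal{D}$ is the algebra automorphism $f_{i,p}\mapsto f_{i,p+1}$. $T_i$ is the automorphism with $T_i(f_{j,p})=f_{j,p+\delta_{i,j}}$ if $c_{i,j}\ge0$ and $T_i(f_{j,p})=\kappa_i^{c_{i,j}}\sum_{r+s=-c_{i,j}}(-1)^rq_i^rf_{i,p}^{(s)}f_{j,p}f_{i,p}^{(r)}$ if $c_{i,j}<0$, where $\kappa_i=q_i^{1/2}(q_i^{-1}-q_i)$, $f^{(n)}=f^n/[n]_i!$; its inverse is $T_i^{-1}(f_{j,p})=f_{j,p-\delta_{i,j}}$ if $c_{i,j}\ge0$ and $\kappa_i^{c_{i,j}}\sum_{r+s=-c_{i,j}}(-1)^rq_i^rf_{i,p}^{(r)}f_{j,p}f_{i,p}^{(s)}$ if $c_{i,j}<0$. *)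

theory Defs
  imports "HOL-Library.Poly_Mapping" "HOL-Computational_Algebra.Polynomial"
          "HOL-Computational_Algebra.Fraction_Field"
begin

text \<open>k is the field of rational functions over Q in the variable v = q^(1/2).\<close>
type_synonym K = "rat poly fract"

definition vv :: K where "vv = Fract [:0, 1:] 1"

definition pbar :: "rat poly \<Rightarrow> K" where
  "pbar p = poly (map_poly (\<lambda>c. Fract [:c:] 1) p) (inverse vv)"

definition barK :: "K \<Rightarrow> K" where
  "barK x = (THE y. \<forall>a b. b \<noteq> 0 \<longrightarrow> x = Fract a b \<longrightarrow> y = pbar a / pbar b)"

text \<open>Finite-type (indecomposable, i.e. g simple) Cartan matrix with symmetrizer d,
  (alpha_i, alpha_j) = d_i c_ij, min d_i = 1. Index set I = UNIV of a finite type.\<close>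
definition finite_type_cartan :: "('i::finite \<Rightarrow> 'i \<Rightarrow> int) \<Rightarrow> ('i \<Rightarrow> nat) \<Rightarrow> bool" where
  "finite_type_cartan C d \<longleftrightarrow>
     (\<forall>i. C i i = 2) \<and> (\<forall>i j. i \<noteq> j \<longrightarrow> C i j \<le> 0) \<and>
     (\<forall>i. d i > 0) \<and> (\<exists>i. d i = 1) \<and>
     (\<forall>i j. int (d i) * C i j = int (d j) * C j i) \<and>
     (\<forall>x :: 'i \<Rightarrow> real. x \<noteq> (\<lambda>_. 0) \<longrightarrow>
        (\<Sum>i\<in>UNIV. \<Sum>j\<in>UNIV. real (d i) * real_of_int (C i j) * x i * x j) > 0) \<and>
     (\<forall>J. J \<noteq> {} \<and> J \<noteq> UNIV \<longrightarrow> (\<exists>i\<in>J. \<exists>j. j \<notin> J \<and> C i j \<noteq> 0))"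

definition diagram_automorphism :: "('i \<Rightarrow> 'i \<Rightarrow> int) \<Rightarrow> ('i \<Rightarrow> 'i) \<Rightarrow> bool" where
  "diagram_automorphism C \<sigma> \<longleftrightarrow> bij \<sigma> \<and> (\<forall>i j. C (\<sigma> i) (\<sigma> j) = C i j)"

text \<open>q_i = q^(d_i) = v^(2 d_i); integer powers of q_i.\<close>
definition qi :: "('i \<Rightarrow> nat) \<Rightarrow> 'i \<Rightarrow> K" where "qi d i = vv ^ (2 * d i)"
definition qpow :: "('i \<Rightarrow> nat) \<Rightarrow> 'i \<Rightarrow> int \<Rightarrow> K" where "qpow d i n = qi d i powi n"

definition qint :: "('i \<Rightarrow> nat) \<Rightarrow> 'i \<Rightarrow> nat \<Rightarrow> K" where
  "qint d i n = (qi d i ^ n - inverse (qi d i) ^ n) / (qi d i - inverse (qi d i))"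
definition qfact :: "('i \<Rightarrow> nat) \<Rightarrow> 'i \<Rightarrow> nat \<Rightarrow> K" where
  "qfact d i n = (\<Prod>k\<in>{1..n}. qint d i k)"

definition kappa :: "('i \<Rightarrow> nat) \<Rightarrow> 'i \<Rightarrow> K" where
  "kappa d i = vv ^ d i * (inverse (qi d i) - qi d i)"

text \<open>Finite k-linear combinations of words in the letters (i,p).\<close>
type_synonym 'i FA = "('i \<times> int) list \<Rightarrow>\<^sub>0 K"

definition fa_mult :: "'i FA \<Rightarrow> 'i FA \<Rightarrow> 'i FA" where
  "fa_mult x y = (\<Sum>u\<in>Poly_Mapping.keys x. \<Sum>w\<in>Poly_Mapping.keys y.
       Poly_Mapping.single (u @ w) (Poly_Mapping.lookup x u * Poly_Mapping.lookup y w))"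

definition fa_one :: "'i FA" where "fa_one = Poly_Mapping.single [] 1"

definition fa_scal :: "K \<Rightarrow> 'i FA \<Rightarrow> 'i FA" where
  "fa_scal c x = (\<Sum>u\<in>Poly_Mapping.keys x. Poly_Mapping.single u (c * Poly_Mapping.lookup x u))"

definition gen :: "'i \<Rightarrow> int \<Rightarrow> 'i FA" where
  "gen i p = Poly_Mapping.single [(i, p)] 1"

definition fa_pow :: "'i FA \<Rightarrow> nat \<Rightarrow> 'i FA" where
  "fa_pow x n = (fa_mult x ^^ n) fa_one"

definition divpow :: "('i \<Rightarrow> nat) \<Rightarrow> 'i \<Rightarrow> 'i FA \<Rightarrow> nat \<Rightarrow> 'i FA" where
  "divpow d i x n = fa_scal (inverse (qfact d i n)) (fa_pow x n)"

definition wimg :: "('i \<times> int \<Rightarrow> 'i FA) \<Rightarrow> ('i \<times> int) list \<Rightarrow> 'i FA" where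
  "wimg g w = foldr (\<lambda>a acc. fa_mult (g a) acc) w fa_one"

definition hom_ext :: "('i \<times> int \<Rightarrow> 'i FA) \<Rightarrow> 'i FA \<Rightarrow> 'i FA" where
  "hom_ext g x = (\<Sum>w\<in>Poly_Mapping.keys x. fa_scal (Poly_Mapping.lookup x w) (wimg g w))"

definition antihom_ext :: "('i \<times> int \<Rightarrow> 'i FA) \<Rightarrow> 'i FA \<Rightarrow> 'i FA" where
  "antihom_ext g x = (\<Sum>w\<in>Poly_Mapping.keys x. fa_scal (Poly_Mapping.lookup x w) (wimg g (rev w)))"

definition bos_rels :: "('i \<Rightarrow> 'i \<Rightarrow> int) \<Rightarrow> ('i \<Rightarrow> nat) \<Rightarrow> 'i FA set" where
  "bos_rels C d =
     {(\<Sum>r\<in>{0..nat (1 - C i j)}. fa_scal ((-1) ^ r)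
          (fa_mult (divpow d i (gen i p) r)
             (fa_mult (gen j p) (divpow d i (gen i p) (nat (1 - C i j) - r)))))
       | i j p. i \<noteq> j}
   \<union> {fa_mult (gen i m) (gen j p)
        - fa_scal (qpow d i ((-1) ^ nat (p - m + 1) * C i j)) (fa_mult (gen j p) (gen i m))
       | i j m p. p > m + 1}
   \<union> {fa_mult (gen i p) (gen j (p + 1))
        - fa_scal (qpow d i (C i j)) (fa_mult (gen j (p + 1)) (gen i p))
        - (if i = j then fa_scal (1 - qi d i ^ 2) fa_one else 0)
       | i j p. True}"

inductive_set fa_ideal :: "'i FA set \<Rightarrow> 'i FA set" for R where
  gen_in: "r \<in> R \<Longrightarrow> r \<in> fa_ideal R"
| zero_in: "0 \<in> fa_ideal R"
| add_in: "x \<in> fa_ideal R \<Longrightarrow> y \<in> fa_ideal R \<Longrightarrow> x + y \<in> fa_ideal R"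
| mult_in: "x \<in> fa_ideal R \<Longrightarrow> fa_mult a (fa_mult x b) \<in> fa_ideal R"

text \<open>Equality in the bosonic extension A-hat = free algebra / ideal.\<close>
definition bos_eq :: "('i \<Rightarrow> 'i \<Rightarrow> int) \<Rightarrow> ('i \<Rightarrow> nat) \<Rightarrow> 'i FA \<Rightarrow> 'i FA \<Rightarrow> bool" where
  "bos_eq C d x y \<longleftrightarrow> x - y \<in> fa_ideal (bos_rels C d)"

definition Dmap :: "'i FA \<Rightarrow> 'i FA" where
  "Dmap = hom_ext (\<lambda>(j, p). gen j (p + 1))"

definition starmap :: "'i FA \<Rightarrow> 'i FA" where
  "starmap = antihom_ext (\<lambda>(j, p). gen j (- p))"

definition sigmamap :: "('i \<Rightarrow> 'i) \<Rightarrow> 'i FA \<Rightarrow> 'i FA" where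
  "sigmamap \<sigma> = hom_ext (\<lambda>(j, p). gen (\<sigma> j) p)"

definition barmap :: "'i FA \<Rightarrow> 'i FA" where
  "barmap x = (\<Sum>w\<in>Poly_Mapping.keys x. fa_scal (barK (Poly_Mapping.lookup x w)) (wimg (\<lambda>(j, p). gen j p) (rev w)))"

definition Tgen :: "('i \<Rightarrow> 'i \<Rightarrow> int) \<Rightarrow> ('i \<Rightarrow> nat) \<Rightarrow> 'i \<Rightarrow> 'i \<times> int \<Rightarrow> 'i FA" where
  "Tgen C d i = (\<lambda>(j, p).
     if C i j \<ge> 0 then gen j (p + (if i = j then 1 else 0))
     else fa_scal (kappa d i powi C i j)
       (\<Sum>r\<in>{0..nat (- C i j)}. fa_scal ((-1) ^ r * qi d i ^ r)
          (fa_mult (divpow d i (gen i p) (nat (- C i j) - r))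
             (fa_mult (gen j p) (divpow d i (gen i p) r)))))"

definition Tinvgen :: "('i \<Rightarrow> 'i \<Rightarrow> int) \<Rightarrow> ('i \<Rightarrow> nat) \<Rightarrow> 'i \<Rightarrow> 'i \<times> int \<Rightarrow> 'i FA" where
  "Tinvgen C d i = (\<lambda>(j, p).
     if C i j \<ge> 0 then gen j (p - (if i = j then 1 else 0))
     else fa_scal (kappa d i powi C i j)
       (\<Sum>r\<in>{0..nat (- C i j)}. fa_scal ((-1) ^ r * qi d i ^ r)
          (fa_mult (divpow d i (gen i p) r)
             (fa_mult (gen j p) (divpow d i (gen i p) (nat (- C i j) - r))))))"

definition Tmap :: "('i \<Rightarrow> 'i \<Rightarrow> int) \<Rightarrow> ('i \<Rightarrow> nat) \<Rightarrow> 'i \<Rightarrow> 'i FA \<Rightarrow> 'i FA" where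
  "Tmap C d i = hom_ext (Tgen C d i)"

definition Tinvmap :: "('i \<Rightarrow> 'i \<Rightarrow> int) \<Rightarrow> ('i \<Rightarrow> nat) \<Rightarrow> 'i \<Rightarrow> 'i FA \<Rightarrow> 'i FA" where
  "Tinvmap C d i = hom_ext (Tinvgen C d i)"

end

theory Submission
  imports Defs
begin


definition emb :: "rat \<Rightarrow> K" where "emb c = Fract [:c:] 1"

lemma emb_add: "emb (a + b) = emb a + emb b" by (simp add: emb_def)
lemma emb_mult: "emb (a * b) = emb a * emb b" by (simp add: emb_def mult.commute)
lemma emb_0 [simp]: "emb 0 = 0" by (simp add: emb_def Zero_fract_def)

lemma pbar_pCons: "pbar (pCons a p) = emb a + inverse vv * pbar p"
  unfolding pbar_def emb_def[symmetric] by (simp add: map_poly_pCons)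
lemma pbar_0 [simp]: "pbar 0 = 0" by (simp add: pbar_def)

lemma pbar_add: "pbar (p + q) = pbar p + pbar q"
proof (induction p q rule: poly_induct2)
  case (pCons a p b q) then show ?case by (simp add: pbar_pCons emb_add algebra_simps)
qed simp

lemma pbar_smult: "pbar (smult a p) = emb a * pbar p"
  by (induction p) (simp_all add: pbar_pCons emb_mult algebra_simps)

lemma pbar_mult: "pbar (p * q) = pbar p * pbar q"
  by (induction p) (simp_all add: pbar_pCons pbar_add pbar_smult algebra_simps)

lemma vv_pow: "vv ^ m = Fract (monom 1 m) 1"
  by (induction m) (simp_all add: vv_def One_fract_def monom_Suc monom_0 pCons_one)

lemma emb_vv_pow: "emb a * vv ^ m = Fract (monom a m) 1"
  by (simp add: vv_pow emb_def smult_monom)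

lemma pbar_reflect: "vv ^ degree p * pbar p = Fract (reflect_poly p) 1"
proof (induction p)
  case 0 then show ?case by (simp add: Zero_fract_def)
next
  case (pCons a p)
  show ?case
  proof (cases "p = 0")
    case True then show ?thesis using pbar_pCons[of a 0] by (simp add: emb_def)
  next
    case False
    have vnz: "vv \<noteq> 0" by (simp add: vv_def eq_fract Zero_fract_def)
    have "vv ^ degree (pCons a p) * pbar (pCons a p) = emb a * vv ^ Suc (degree p) + vv ^ degree p * pbar p"
      using False vnz by (simp add: pbar_pCons algebra_simps)
    also have "\<dots> = Fract (reflect_poly (pCons a p)) 1"
      using False pCons.IH emb_vv_pow[of a "Suc (degree p)"] by (simp add: reflect_poly_pCons' add.commute)
    finally show ?thesis .
  qed
qed

lemma pbar_nz: "p \<noteq> 0 \<Longrightarrow> pbar p \<noteq> 0"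
proof
  assume "p \<noteq> 0" "pbar p = 0"
  then have "Fract (reflect_poly p) 1 = 0" using pbar_reflect[of p] by simp
  then have "reflect_poly p = 0" by (simp add: Zero_fract_def eq_fract)
  then show False using \<open>p \<noteq> 0\<close>
    by (metis coeff_0_reflect_poly_0_iff coeff_0)
qed

lemma barK_Fract: assumes "b \<noteq> 0" shows "barK (Fract a b) = pbar a / pbar b"
proof -
  have "\<forall>a' b'. b' \<noteq> 0 \<longrightarrow> Fract a b = Fract a' b' \<longrightarrow> pbar a / pbar b = pbar a' / pbar b'"
  proof (intro allI impI)
    fix a' b' :: "rat poly" assume "b' \<noteq> 0" "Fract a b = Fract a' b'"
    then have "a * b' = a' * b" using assms by (simp add: eq_fract)
    then have "pbar a * pbar b' = pbar a' * pbar b" by (metis pbar_mult)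
    then show "pbar a / pbar b = pbar a' / pbar b'"
      using pbar_nz[OF assms] pbar_nz[OF \<open>b' \<noteq> 0\<close>] by (simp add: divide_simps)
  qed
  then show ?thesis unfolding barK_def
    by (rule the_equality) (use assms in blast)
qed

lemma barK_add: "barK (x + y) = barK x + barK y"
proof (cases x; cases y)
  fix a b c e assume "x = Fract a b" "b \<noteq> 0" "y = Fract c e" "e \<noteq> 0"
  then show ?thesis using pbar_nz[of b] pbar_nz[of e]
    by (simp add: barK_Fract pbar_add pbar_mult divide_simps algebra_simps)
qed

lemma barK_mult: "barK (x * y) = barK x * barK y"
proof (cases x; cases y)
  fix a b c e assume "x = Fract a b" "b \<noteq> 0" "y = Fract c e" "e \<noteq> 0"
  then show ?thesis using pbar_nz[of b] pbar_nz[of e]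
    by (simp add: barK_Fract pbar_add pbar_mult divide_simps algebra_simps)
qed

lemma pbar_1: "pbar 1 = 1"
  using pbar_pCons[of 1 0] by (simp add: emb_def One_fract_def one_pCons)

lemma barK_1 [simp]: "barK 1 = 1"
  by (simp add: One_fract_def barK_Fract pbar_1)
lemma barK_0 [simp]: "barK 0 = 0"
  by (simp add: Zero_fract_def barK_Fract pbar_1)
lemma barK_vv: "barK vv = inverse vv"
proof -
  have "pbar [:0,1:] = inverse vv" using pbar_pCons[of 0 1] pbar_1 by (simp add: pCons_one)
  then show ?thesis by (simp add: vv_def barK_Fract pbar_1)
qed



lemma expand: "x = (\<Sum>u\<in>Poly_Mapping.keys x. Poly_Mapping.single u (Poly_Mapping.lookup x u))"
  by (rule poly_mapping_eqI)
     (simp add: lookup_sum lookup_single when_def in_keys_iff sum.delta' [where 'b = 'b] split: if_splits)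

lemma expand_superset:
  assumes "finite A" "Poly_Mapping.keys x \<subseteq> A"
  shows "x = (\<Sum>u\<in>A. Poly_Mapping.single u (Poly_Mapping.lookup x u))"
proof -
  have "(\<Sum>u\<in>A. Poly_Mapping.single u (Poly_Mapping.lookup x u)) =
        (\<Sum>u\<in>Poly_Mapping.keys x. Poly_Mapping.single u (Poly_Mapping.lookup x u))"
    by (rule sum.mono_neutral_right) (use assms in \<open>auto simp: in_keys_iff\<close>)
  then show ?thesis using expand[of x] by simp
qed

lemma pm_induct:
  fixes x :: "'a \<Rightarrow>\<^sub>0 'b::comm_monoid_add"
  assumes "P 0" "\<And>k v. P (Poly_Mapping.single k v)" "\<And>x y. P x \<Longrightarrow> P y \<Longrightarrow> P (x + y)"
  shows "P x"
proof -
  have "P (\<Sum>u\<in>A. Poly_Mapping.single u (Poly_Mapping.lookup x u))" if "finite A" for A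
    using that by (induction A rule: finite_induct) (simp_all add: assms)
  then show ?thesis using expand[of x] by (metis finite_keys)
qed

lemma lookup_fa_scal [simp]: "Poly_Mapping.lookup (fa_scal c x) u = c * Poly_Mapping.lookup x u"
  unfolding fa_scal_def
  by (simp add: lookup_sum lookup_single when_def in_keys_iff sum.delta' split: if_splits)

lemma fa_scal_add: "fa_scal c (x + y) = fa_scal c x + fa_scal c y"
  by (rule poly_mapping_eqI) (simp add: lookup_add algebra_simps)
lemma fa_scal_add_left: "fa_scal (a + b) x = fa_scal a x + fa_scal b x"
  by (rule poly_mapping_eqI) (simp add: lookup_add algebra_simps)
lemma fa_scal_scal [simp]: "fa_scal a (fa_scal b x) = fa_scal (a * b) x"
  by (rule poly_mapping_eqI) (simp add: algebra_simps)
lemma fa_scal_one [simp]: "fa_scal 1 x = x"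
  by (rule poly_mapping_eqI) simp
lemma fa_scal_0 [simp]: "fa_scal 0 x = 0"
  by (rule poly_mapping_eqI) simp
lemma fa_scal_zero [simp]: "fa_scal c 0 = 0"
  by (rule poly_mapping_eqI) simp
lemma fa_scal_single [simp]: "fa_scal c (Poly_Mapping.single u a) = Poly_Mapping.single u (c * a)"
  by (rule poly_mapping_eqI) (simp add: lookup_single when_def)
lemma fa_scal_sum: "fa_scal c (sum f A) = (\<Sum>a\<in>A. fa_scal c (f a))"
  by (rule poly_mapping_eqI) (simp add: lookup_sum sum_distrib_left)
lemma fa_scal_sum_left: "fa_scal (sum f A) x = (\<Sum>a\<in>A. fa_scal (f a) x)"
  by (rule poly_mapping_eqI) (simp add: lookup_sum sum_distrib_right)
lemma fa_scal_diff: "fa_scal c (x - y) = fa_scal c x - fa_scal c y"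
  by (rule poly_mapping_eqI) (simp add: lookup_minus algebra_simps)
lemma fa_scal_neg_left: "fa_scal (- a) x = - fa_scal a x"
  by (rule poly_mapping_eqI) (simp add: lookup_uminus)

lemma fa_mult_superset:
  assumes "finite A" "Poly_Mapping.keys x \<subseteq> A" "finite B" "Poly_Mapping.keys y \<subseteq> B"
  shows "fa_mult x y = (\<Sum>u\<in>A. \<Sum>w\<in>B. Poly_Mapping.single (u @ w) (Poly_Mapping.lookup x u * Poly_Mapping.lookup y w))"
proof -
  have "(\<Sum>u\<in>A. \<Sum>w\<in>B. Poly_Mapping.single (u @ w) (Poly_Mapping.lookup x u * Poly_Mapping.lookup y w))
     = (\<Sum>u\<in>Poly_Mapping.keys x. \<Sum>w\<in>B. Poly_Mapping.single (u @ w) (Poly_Mapping.lookup x u * Poly_Mapping.lookup y w))"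
    by (rule sum.mono_neutral_right) (use assms in \<open>auto simp: in_keys_iff\<close>)
  also have "\<dots> = (\<Sum>u\<in>Poly_Mapping.keys x. \<Sum>w\<in>Poly_Mapping.keys y. Poly_Mapping.single (u @ w) (Poly_Mapping.lookup x u * Poly_Mapping.lookup y w))"
    by (intro sum.cong refl sum.mono_neutral_right) (use assms in \<open>auto simp: in_keys_iff\<close>)
  finally show ?thesis unfolding fa_mult_def by simp
qed

lemma fa_mult_add_left: "fa_mult (x + y) z = fa_mult x z + fa_mult y z"
proof -
  let ?A = "Poly_Mapping.keys x \<union> Poly_Mapping.keys y"
  have "Poly_Mapping.keys (x + y) \<subseteq> ?A" by (rule keys_add)
  then show ?thesis
    by (simp add: fa_mult_superset[of ?A _ "Poly_Mapping.keys z"] lookup_add distrib_right single_add sum.distrib)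
qed

lemma fa_mult_add_right: "fa_mult z (x + y) = fa_mult z x + fa_mult z y"
proof -
  let ?A = "Poly_Mapping.keys x \<union> Poly_Mapping.keys y"
  have "Poly_Mapping.keys (x + y) \<subseteq> ?A" by (rule keys_add)
  then show ?thesis
    by (simp add: fa_mult_superset[of "Poly_Mapping.keys z" _ ?A] lookup_add distrib_left single_add sum.distrib)
qed

lemma fa_mult_zero_left [simp]: "fa_mult 0 x = 0"
  by (simp add: fa_mult_def)
lemma fa_mult_zero_right [simp]: "fa_mult x 0 = 0"
  by (simp add: fa_mult_def)

lemma fa_mult_single [simp]:
  "fa_mult (Poly_Mapping.single u a) (Poly_Mapping.single w b) = Poly_Mapping.single (u @ w) (a * b)"
  by (simp add: fa_mult_superset[of "{u}" _ "{w}"])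

lemma fa_mult_scal_left: "fa_mult (fa_scal c x) y = fa_scal c (fa_mult x y)"
proof (induction x rule: pm_induct)
  case (3 x y) then show ?case by (simp add: fa_scal_add fa_mult_add_left)
next
  case (2 k v) show ?case
    by (induction y rule: pm_induct) (simp_all add: fa_scal_add fa_mult_add_right mult.assoc)
qed simp

lemma fa_mult_scal_right: "fa_mult x (fa_scal c y) = fa_scal c (fa_mult x y)"
proof (induction x rule: pm_induct)
  case (3 x y) then show ?case by (simp add: fa_scal_add fa_mult_add_left)
next
  case (2 k v) show ?case
    by (induction y rule: pm_induct) (simp_all add: fa_scal_add fa_mult_add_right mult.left_commute)
qed simp

lemma fa_mult_assoc: "fa_mult (fa_mult x y) z = fa_mult x (fa_mult y z)"
proof (induction x rule: pm_induct)
  case (3 x1 x2) then show ?case by (simp add: fa_mult_add_left)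
next
  case (2 k v) show ?case
  proof (induction y rule: pm_induct)
    case (3 y1 y2) then show ?case by (simp add: fa_mult_add_left fa_mult_add_right)
  next
    case (2 k' v') show ?case
      by (induction z rule: pm_induct) (simp_all add: fa_mult_add_right mult.assoc)
  qed simp
qed simp

lemma fa_mult_one_left [simp]: "fa_mult fa_one x = x"
  unfolding fa_one_def by (induction x rule: pm_induct) (simp_all add: fa_mult_add_right)
lemma fa_mult_one_right [simp]: "fa_mult x fa_one = x"
  unfolding fa_one_def by (induction x rule: pm_induct) (simp_all add: fa_mult_add_left)

lemma fa_mult_sum_left: "fa_mult (sum f A) y = (\<Sum>a\<in>A. fa_mult (f a) y)"
  by (induction A rule: infinite_finite_induct) (simp_all add: fa_mult_add_left)
lemma fa_mult_sum_right: "fa_mult y (sum f A) = (\<Sum>a\<in>A. fa_mult y (f a))"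
  by (induction A rule: infinite_finite_induct) (simp_all add: fa_mult_add_right)

lemma fa_pow_Suc: "fa_pow x (Suc n) = fa_mult x (fa_pow x n)"
  by (simp add: fa_pow_def)
lemma fa_pow_0 [simp]: "fa_pow x 0 = fa_one"
  by (simp add: fa_pow_def)
lemma fa_pow_Suc': "fa_pow x (Suc n) = fa_mult (fa_pow x n) x"
  by (induction n) (simp_all add: fa_pow_Suc fa_mult_assoc[symmetric])

lemma wimg_Nil [simp]: "wimg g [] = fa_one" by (simp add: wimg_def)
lemma wimg_Cons: "wimg g (a # w) = fa_mult (g a) (wimg g w)" by (simp add: wimg_def)
lemma wimg_append: "wimg g (u @ w) = fa_mult (wimg g u) (wimg g w)"
  by (induction u) (simp_all add: wimg_Cons fa_mult_assoc)
lemma wimg_single: "wimg g [a] = g a" by (simp add: wimg_Cons)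



definition rhom :: "(K \<Rightarrow> K) \<Rightarrow> bool" where
  "rhom \<phi> \<longleftrightarrow> (\<forall>a b. \<phi> (a + b) = \<phi> a + \<phi> b) \<and> (\<forall>a b. \<phi> (a * b) = \<phi> a * \<phi> b) \<and> \<phi> 1 = 1"

lemma rhom_id: "rhom (\<lambda>c. c)" by (simp add: rhom_def)

lemma rhom_0: "rhom \<phi> \<Longrightarrow> \<phi> 0 = 0"
  unfolding rhom_def by (metis add_cancel_right_right)

definition ext :: "(K \<Rightarrow> K) \<Rightarrow> ('i \<times> int \<Rightarrow> 'i FA) \<Rightarrow> bool \<Rightarrow> 'i FA \<Rightarrow> 'i FA" where
  "ext \<phi> g b x = (\<Sum>w\<in>Poly_Mapping.keys x. fa_scal (\<phi> (Poly_Mapping.lookup x w)) (wimg g (if b then rev w else w)))"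

lemma ext_superset:
  assumes "rhom \<phi>" "finite A" "Poly_Mapping.keys x \<subseteq> A"
  shows "ext \<phi> g b x = (\<Sum>w\<in>A. fa_scal (\<phi> (Poly_Mapping.lookup x w)) (wimg g (if b then rev w else w)))"
  unfolding ext_def
  by (rule sum.mono_neutral_left) (use assms in \<open>auto simp: in_keys_iff rhom_0\<close>)

lemma ext_add: assumes "rhom \<phi>" shows "ext \<phi> g b (x + y) = ext \<phi> g b x + ext \<phi> g b y"
proof -
  let ?A = "Poly_Mapping.keys x \<union> Poly_Mapping.keys y"
  have "Poly_Mapping.keys (x + y) \<subseteq> ?A" by (rule keys_add)
  then show ?thesis using assms
    by (simp add: ext_superset[of _ ?A] lookup_add fa_scal_add_left sum.distrib rhom_def)
qed

lemma ext_zero [simp]: "ext \<phi> g b 0 = 0" by (simp add: ext_def)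

lemma ext_single: assumes "rhom \<phi>"
  shows "ext \<phi> g b (Poly_Mapping.single w c) = fa_scal (\<phi> c) (wimg g (if b then rev w else w))"
  using assms by (simp add: ext_superset[of _ "{w}"])

lemma ext_scal: assumes "rhom \<phi>" shows "ext \<phi> g b (fa_scal c x) = fa_scal (\<phi> c) (ext \<phi> g b x)"
  by (induction x rule: pm_induct) (use assms in \<open>simp_all add: ext_add fa_scal_add ext_single rhom_def\<close>)

lemma ext_sum: assumes "rhom \<phi>" shows "ext \<phi> g b (sum f A) = (\<Sum>a\<in>A. ext \<phi> g b (f a))"
  by (induction A rule: infinite_finite_induct) (simp_all add: ext_add[OF assms])

lemma ext_diff: assumes "rhom \<phi>" shows "ext \<phi> g b (x - y) = ext \<phi> g b x - ext \<phi> g b y"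
  by (metis add_diff_cancel_right' assms diff_add_cancel ext_add)

lemma ext_mult: assumes "rhom \<phi>"
  shows "ext \<phi> g b (fa_mult x y) = (if b then fa_mult (ext \<phi> g b y) (ext \<phi> g b x) else fa_mult (ext \<phi> g b x) (ext \<phi> g b y))"
proof (induction x rule: pm_induct)
  case (3 x1 x2) then show ?case
    by (simp add: fa_mult_add_left fa_mult_add_right ext_add[OF assms])
next
  case (2 k v) show ?case
  proof (induction y rule: pm_induct)
    case (3 y1 y2) then show ?case
      by (simp add: fa_mult_add_left fa_mult_add_right ext_add[OF assms])
  next
    case (2 k' v') show ?case
      using assms
      by (simp add: ext_single wimg_append fa_mult_scal_left fa_mult_scal_right rhom_def mult.commute)
  qed simp
qed simp

lemma ext_one: assumes "rhom \<phi>" shows "ext \<phi> g b fa_one = fa_one"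
  using assms by (simp add: fa_one_def ext_single rhom_def)

lemma ext_gen: assumes "rhom \<phi>" shows "ext \<phi> g b (gen j p) = g (j, p)"
  using assms by (simp add: gen_def ext_single rhom_def wimg_single)

lemma ext_pow: assumes "rhom \<phi>" shows "ext \<phi> g b (fa_pow x n) = fa_pow (ext \<phi> g b x) n"
  by (cases b; induction n) (simp_all add: ext_one[OF assms] ext_mult[OF assms] fa_pow_Suc fa_pow_Suc'[symmetric])

lemma ext_divpow: assumes "rhom \<phi>" "\<phi> (inverse (qfact d i n)) = inverse (qfact d i n)"
  shows "ext \<phi> g b (divpow d i x n) = divpow d i (ext \<phi> g b x) n"
  using assms by (simp add: divpow_def ext_scal ext_pow)

lemma ext_wimg: assumes "rhom \<phi>"
  shows "ext \<phi> g b (wimg h w) = wimg (ext \<phi> g b \<circ> h) (if b then rev w else w)"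
  by (cases b; induction w) (simp_all add: ext_one[OF assms] wimg_Cons ext_mult[OF assms] wimg_append wimg_single)

lemma ext_comp: assumes "rhom \<phi>1"
  shows "ext \<phi>1 g1 b1 (ext \<phi>2 g2 b2 x) = ext (\<phi>1 \<circ> \<phi>2) (ext \<phi>1 g1 b1 \<circ> g2) (b1 \<noteq> b2) x"
  unfolding ext_def[of \<phi>2] ext_def[of "\<phi>1 \<circ> \<phi>2"]
  by (cases b1; cases b2) (simp_all add: ext_sum[OF assms] ext_scal[OF assms] ext_wimg[OF assms])

lemma hom_ext_eq: "hom_ext g = ext (\<lambda>c. c) g False"
  by (simp add: fun_eq_iff hom_ext_def ext_def)
lemma antihom_ext_eq: "antihom_ext g = ext (\<lambda>c. c) g True"
  by (simp add: fun_eq_iff antihom_ext_def ext_def)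
lemma barmap_eq: "barmap = ext barK (\<lambda>(j, p). gen j p) True"
  by (simp add: fun_eq_iff barmap_def ext_def)



lemmas extsimps = ext_scal[OF rhom_id] ext_sum[OF rhom_id] ext_mult[OF rhom_id] ext_divpow[OF rhom_id] ext_gen[OF rhom_id]

lemma bos_eq_refl: "x = y \<Longrightarrow> bos_eq C d x y"
  by (simp add: bos_eq_def fa_ideal.zero_in)

lemma part1: "Dmap (Tmap C d i x) = Tmap C d i (Dmap x)"
proof -
  have g: "Dmap \<circ> Tgen C d i = Tmap C d i \<circ> (\<lambda>(j, p). gen j (p + 1))"
  proof (rule ext, clarify)
    fix j p
    show "(Dmap \<circ> Tgen C d i) (j, p) = (Tmap C d i \<circ> (\<lambda>(j, p). gen j (p + 1))) (j, p)"
      unfolding Dmap_def Tmap_def hom_ext_eq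
      by (simp add: Tgen_def extsimps)
  qed
  show ?thesis
    unfolding Dmap_def Tmap_def hom_ext_eq ext_comp[OF rhom_id] 
    unfolding Dmap_def[symmetric] Tmap_def[symmetric] hom_ext_eq[symmetric]  g ..
qed

lemma part2: "Tinvmap C d i x = starmap (Tmap C d i (starmap x))"
proof -
  have g: "Tinvgen C d i = starmap \<circ> (Tmap C d i \<circ> (\<lambda>(j, p). gen j (- p)))"
  proof (rule ext, clarify)
    fix j p
    show "Tinvgen C d i (j, p) = (starmap \<circ> (Tmap C d i \<circ> (\<lambda>(j, p). gen j (- p)))) (j, p)"
      unfolding starmap_def Tmap_def hom_ext_eq antihom_ext_eq
      by (simp add: Tgen_def Tinvgen_def extsimps fa_mult_assoc)
  qed
  show ?thesis
    unfolding starmap_def Tmap_def Tinvmap_def hom_ext_eq antihom_ext_eq ext_comp[OF rhom_id] 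
    unfolding starmap_def[symmetric] Tmap_def[symmetric] hom_ext_eq[symmetric] antihom_ext_eq[symmetric] g
    by (simp add: o_def hom_ext_eq)
qed

lemma sym_prop:
  fixes C :: "'i \<Rightarrow> 'i \<Rightarrow> int" and d d' :: "'i \<Rightarrow> nat"
  assumes pos: "\<forall>i. d i > 0" and sd: "\<forall>i j. int (d i) * C i j = int (d j) * C j i"
    and sd': "\<forall>i j. int (d' i) * C i j = int (d' j) * C j i"
    and conn: "\<forall>J. J \<noteq> {} \<and> J \<noteq> UNIV \<longrightarrow> (\<exists>i\<in>J. \<exists>j. j \<notin> J \<and> C i j \<noteq> 0)"
  shows "d' k * d i0 = d k * d' i0"
proof (rule ccontr)
  assume nk: "d' k * d i0 \<noteq> d k * d' i0"
  define J where "J = {k. d' k * d i0 = d k * d' i0}"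
  have "i0 \<in> J" by (simp add: J_def mult.commute)
  moreover have "k \<notin> J" using nk by (simp add: J_def)
  ultimately obtain a b where a: "a \<in> J" and b: "b \<notin> J" and c: "C a b \<noteq> 0"
    using conn by blast
  have e1: "int (d a) * int (d' b) * C a b = int (d b) * int (d' b) * C b a"
    using sd by (metis mult.assoc mult.commute)
  have e2: "int (d' a) * int (d b) * C a b = int (d' b) * int (d b) * C b a"
    using sd' by (metis mult.assoc mult.commute)
  have "int (d a) * int (d' b) = int (d' a) * int (d b)"
    using e1 e2 c by (metis mult.commute mult_right_cancel)
  then have ab: "d a * d' b = d' a * d b" by (metis of_nat_eq_iff of_nat_mult)
  have aJ: "d' a * d i0 = d a * d' i0" using a by (simp add: J_def)
  have "d a * (d' b * d i0) = d a * (d b * d' i0)"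
  proof -
    have "d a * (d' b * d i0) = (d a * d' b) * d i0" by simp
    also have "\<dots> = d b * (d' a * d i0)" using ab by simp
    also have "\<dots> = d b * (d a * d' i0)" using aJ by simp
    finally show ?thesis by (simp add: mult_ac)
  qed
  then have "d' b * d i0 = d b * d' i0" using pos by (metis mult_left_cancel not_gr0)
  then show False using b by (simp add: J_def)
qed

lemma d_sigma:
  assumes "finite_type_cartan C d" "diagram_automorphism C \<sigma>"
  shows "d (\<sigma> k) = d k"
proof -
  from assms(1) have pos: "\<forall>i. d i > 0" and sd: "\<forall>i j. int (d i) * C i j = int (d j) * C j i"
    and conn: "\<forall>J. J \<noteq> {} \<and> J \<noteq> UNIV \<longrightarrow> (\<exists>i\<in>J. \<exists>j. j \<notin> J \<and> C i j \<noteq> 0)"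
    and one: "\<exists>i. d i = 1"
    unfolding finite_type_cartan_def by blast+
  from assms(2) have bij: "bij \<sigma>" and cs: "\<forall>i j. C (\<sigma> i) (\<sigma> j) = C i j"
    unfolding diagram_automorphism_def by blast+
  have sd': "\<forall>i j. int (d (\<sigma> i)) * C i j = int (d (\<sigma> j)) * C j i"
    using sd cs by metis
  obtain i0 where i0: "d i0 = 1" using one by blast
  obtain i1 where i1: "\<sigma> i1 = i0" using bij by (metis bij_pointE)
  have P: "d (\<sigma> k') * d i0 = d k' * d (\<sigma> i0)" for k'
    using sym_prop[OF pos sd sd' conn] .
  have "d (\<sigma> i1) * d i0 = d i1 * d (\<sigma> i0)" using P .
  then have "1 = d i1 * d (\<sigma> i0)" using i0 i1 by simp
  then have "d (\<sigma> i0) = 1" by simp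
  then show ?thesis using P[of k] i0 by simp
qed

lemma part3:
  assumes "finite_type_cartan C d" "diagram_automorphism C \<sigma>"
  shows "sigmamap \<sigma> (Tmap C d i x) = Tmap C d (\<sigma> i) (sigmamap \<sigma> x)"
proof -
  have ds: "d (\<sigma> i) = d i" by (rule d_sigma[OF assms])
  have inj: "inj \<sigma>" and cs: "\<And>a b. C (\<sigma> a) (\<sigma> b) = C a b"
    using assms(2) unfolding diagram_automorphism_def by (auto simp: bij_def)
  have q1: "qi d (\<sigma> i) = qi d i" by (simp add: qi_def ds)
  have q2: "kappa d (\<sigma> i) = kappa d i" by (simp add: kappa_def ds q1)
  have q3: "qfact d (\<sigma> i) = qfact d i" unfolding qfact_def qint_def q1 by (rule refl)
  have q4: "divpow d (\<sigma> i) = divpow d i" by (simp add: fun_eq_iff divpow_def q3)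
  have g: "sigmamap \<sigma> \<circ> Tgen C d i = Tmap C d (\<sigma> i) \<circ> (\<lambda>(j, p). gen (\<sigma> j) p)"
  proof (rule ext, clarify)
    fix j p
    have ij: "(\<sigma> i = \<sigma> j) = (i = j)" using inj by (auto dest: injD)
    show "(sigmamap \<sigma> \<circ> Tgen C d i) (j, p) = (Tmap C d (\<sigma> i) \<circ> (\<lambda>(j, p). gen (\<sigma> j) p)) (j, p)"
      unfolding sigmamap_def Tmap_def hom_ext_eq
      by (simp add: Tgen_def extsimps cs ij q1 q2 q4)
  qed
  show ?thesis
    unfolding sigmamap_def Tmap_def hom_ext_eq ext_comp[OF rhom_id] 
    unfolding sigmamap_def[symmetric] Tmap_def[symmetric] hom_ext_eq[symmetric] g ..
qed



lemma rhom_barK: "rhom barK" by (simp add: rhom_def barK_add barK_mult)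

lemma barK_minus: "barK (- x) = - barK x"
  by (metis add_eq_0_iff barK_0 barK_add)
lemma barK_diff: "barK (x - y) = barK x - barK y"
  by (metis add_uminus_conv_diff barK_add barK_minus)
lemma barK_inverse: "barK (inverse x) = inverse (barK x)"
proof (cases "x = 0")
  case False
  then have "barK x * barK (inverse x) = 1" by (metis barK_1 barK_mult right_inverse)
  then show ?thesis by (metis inverse_unique)
qed simp
lemma barK_divide: "barK (x / y) = barK x / barK y"
  by (simp add: divide_inverse barK_mult barK_inverse)
lemma barK_power: "barK (x ^ n) = barK x ^ n"
  by (induction n) (simp_all add: barK_mult)
lemma barK_powi: "barK (x powi n) = barK x powi n"
  by (cases "n \<ge> 0") (auto simp: power_int_def barK_power barK_inverse)

lemma vv_nz: "vv \<noteq> 0" by (simp add: vv_def eq_fract Zero_fract_def)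
lemma qi_nz: "qi d i \<noteq> 0" by (simp add: qi_def vv_nz)

lemma barK_qi: "barK (qi d i) = inverse (qi d i)"
  by (simp add: qi_def barK_power barK_vv power_inverse)

lemma barK_qint: "barK (qint d i n) = qint d i n"
proof -
  have "barK (qint d i n) = (inverse (qi d i) ^ n - qi d i ^ n) / (inverse (qi d i) - qi d i)"
    by (simp add: qint_def barK_divide barK_diff barK_power barK_inverse barK_qi)
  also have "\<dots> = qint d i n"
    unfolding qint_def by (metis minus_diff_eq minus_divide_divide)
  finally show ?thesis .
qed

lemma barK_prod: "barK (prod f A) = (\<Prod>a\<in>A. barK (f a))"
  by (induction A rule: infinite_finite_induct) (simp_all add: barK_mult)

lemma barK_qfact: "barK (inverse (qfact d i n)) = inverse (qfact d i n)"
  by (simp add: barK_inverse qfact_def barK_prod barK_qint)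

lemma barK_kappa: "barK (kappa d i) = - inverse (qi d i) * kappa d i"
proof -
  have q: "qi d i = vv ^ d i * vv ^ d i" by (simp add: qi_def power_add[symmetric] mult_2)
  have "barK (kappa d i) = inverse vv ^ d i * (qi d i - inverse (qi d i))"
    by (simp add: kappa_def barK_mult barK_power barK_vv barK_diff barK_inverse barK_qi)
  also have "\<dots> = - inverse (qi d i) * kappa d i"
    unfolding kappa_def q using vv_nz by (simp add: field_simps)
  finally show ?thesis .
qed

lemma barK_sign: "barK ((-1) ^ r * qi d i ^ r) = (-1) ^ r * inverse (qi d i) ^ r"
  by (simp add: barK_mult barK_power barK_minus barK_qi)

lemma coef_identity:
  fixes q :: K
  assumes "q \<noteq> 0" "r \<le> n"
  shows "(-1) ^ n * q ^ n * ((-1) ^ (n - r) * inverse q ^ (n - r)) = (-1) ^ r * q ^ r"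
proof -
  obtain k where n: "n = r + k" using assms(2) le_Suc_ex by blast
  have "(-1::K) ^ n * (-1) ^ (n - r) = (-1) ^ r * ((-1) ^ k * (-1) ^ k)"
    by (simp add: n power_add mult_ac)
  also have "\<dots> = (-1) ^ r" by (simp add: power_add[symmetric] mult_2[symmetric])
  finally have s: "(-1::K) ^ n * (-1) ^ (n - r) = (-1) ^ r" .
  have t: "q ^ n * inverse q ^ (n - r) = q ^ r"
    using assms(1) by (simp add: n power_add power_inverse field_simps)
  have "(-1) ^ n * q ^ n * ((-1) ^ (n - r) * inverse q ^ (n - r))
      = ((-1::K) ^ n * (-1) ^ (n - r)) * (q ^ n * inverse q ^ (n - r))" by (simp add: mult_ac)
  then show ?thesis using s t by simp
qed

lemmas barsimps = ext_scal[OF rhom_barK] ext_sum[OF rhom_barK] ext_mult[OF rhom_barK]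
  ext_divpow[OF rhom_barK barK_qfact] ext_gen[OF rhom_barK]

lemma barmap_Tgen: "barmap (Tgen C d i (j, p)) = Tgen C d i (j, p)"
proof (cases "C i j \<ge> 0")
  case True then show ?thesis by (simp add: Tgen_def barmap_eq barsimps)
next
  case False
  define n where "n = nat (- C i j)"
  have Cn: "C i j = - int n" using False by (simp add: n_def)
  define D where "D m = divpow d i (gen i p) m" for m
  define M where "M r = fa_mult (D (n - r)) (fa_mult (gen j p) (D r))" for r
  define K where "K = kappa d i powi C i j"
  define q where "q = qi d i"
  have T: "Tgen C d i (j, p) = fa_scal K (\<Sum>r\<in>{0..n}. fa_scal ((-1) ^ r * q ^ r) (M r))"
    using False by (simp add: Tgen_def n_def D_def M_def K_def q_def)
  have bK: "barK K = (-1) ^ n * q ^ n * K"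
  proof -
    have "barK K = (- inverse q * kappa d i) powi (- int n)"
      by (simp add: K_def barK_powi barK_kappa Cn q_def)
    also have "\<dots> = (- inverse q) powi (- int n) * kappa d i powi (- int n)"
      by (rule power_int_mult_distrib)
    also have "(- inverse q) powi (- int n) = (-1) ^ n * q ^ n"
    proof -
      have "(- inverse q) powi (- int n) = inverse (inverse (- q) ^ n)"
        by (simp only: inverse_minus_eq[symmetric] power_int_minus power_int_of_nat)
      also have "\<dots> = (- q) ^ n" by (simp only: power_inverse inverse_inverse_eq)
      also have "\<dots> = (-1) ^ n * q ^ n" by (rule power_minus)
      finally show ?thesis .
    qed
    finally show ?thesis by (simp add: K_def Cn)
  qed
  have "barmap (Tgen C d i (j, p)) =
      fa_scal (barK K) (\<Sum>r\<in>{0..n}. fa_scal ((-1) ^ r * inverse q ^ r) (M (n - r)))"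
    unfolding T barmap_eq
    by (simp add: barsimps M_def D_def barK_sign q_def fa_mult_assoc)
  also have "(\<Sum>r\<in>{0..n}. fa_scal ((-1) ^ r * inverse q ^ r) (M (n - r)))
      = (\<Sum>r\<in>{0..n}. fa_scal ((-1) ^ (n - r) * inverse q ^ (n - r)) (M r))"
    by (subst sum.atLeastAtMost_rev) (intro sum.cong refl, simp)
  also have "fa_scal (barK K) \<dots> = fa_scal K (\<Sum>r\<in>{0..n}. fa_scal ((-1) ^ r * q ^ r) (M r))"
    unfolding fa_scal_sum fa_scal_scal
  proof (intro sum.cong refl)
    fix r assume "r \<in> {0..n}"
    then have "barK K * ((-1) ^ (n - r) * inverse q ^ (n - r)) = K * ((-1) ^ r * q ^ r)"
      using coef_identity[of q r n] qi_nz[of d i] unfolding bK q_def by (simp add: mult_ac)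
    then show "fa_scal (barK K * ((-1) ^ (n - r) * inverse q ^ (n - r))) (M r) = fa_scal (K * ((-1) ^ r * q ^ r)) (M r)"
      by simp
  qed
  finally show ?thesis using T by simp
qed

lemma part4: "Tmap C d i (barmap x) = barmap (Tmap C d i x)"
proof -
  have g: "Tmap C d i \<circ> (\<lambda>(j, p). gen j p) = barmap \<circ> Tgen C d i"
  proof (rule ext, clarify)
    fix j p
    show "(Tmap C d i \<circ> (\<lambda>(j, p). gen j p)) (j, p) = (barmap \<circ> Tgen C d i) (j, p)"
      using barmap_Tgen[of C d i j p] unfolding Tmap_def hom_ext_eq
      by (simp add: ext_gen[OF rhom_id])
  qed
  show ?thesis
    unfolding barmap_eq Tmap_def hom_ext_eq ext_comp[OF rhom_id] ext_comp[OF rhom_barK]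
    unfolding barmap_eq[symmetric] Tmap_def[symmetric] hom_ext_eq[symmetric] g
    by (simp add: o_def)
qed


theorem lemma4p1:
  fixes C :: "'i::finite \<Rightarrow> 'i \<Rightarrow> int" and d :: "'i \<Rightarrow> nat" and i :: 'i
  assumes "finite_type_cartan C d"
  shows "(\<forall>x. bos_eq C d (Dmap (Tmap C d i x)) (Tmap C d i (Dmap x)))
       \<and> (\<forall>x. bos_eq C d (Tinvmap C d i x) (starmap (Tmap C d i (starmap x))))
       \<and> (\<forall>\<sigma> x. diagram_automorphism C \<sigma> \<longrightarrow>
              bos_eq C d (sigmamap \<sigma> (Tmap C d i x)) (Tmap C d (\<sigma> i) (sigmamap \<sigma> x)))
       \<and> (\<forall>x. bos_eq C d (Tmap C d i (barmap x)) (barmap (Tmap C d i x)))"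
proof (intro conjI allI impI bos_eq_refl)
  fix x show "Dmap (Tmap C d i x) = Tmap C d i (Dmap x)" by (rule part1)
next
  fix x show "Tinvmap C d i x = starmap (Tmap C d i (starmap x))" by (rule part2)
next
  fix \<sigma> x assume "diagram_automorphism C \<sigma>"
  then show "sigmamap \<sigma> (Tmap C d i x) = Tmap C d (\<sigma> i) (sigmamap \<sigma> x)"
    by (rule part3[OF assms])
next
  fix x show "Tmap C d i (barmap x) = barmap (Tmap C d i x)" by (rule part4)
qed

end
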